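(* Fix a real number $0<\varepsilon<1$. There is a constant $c_0=c_0(\varepsilon)$ such that for every real $c\ge c_0$ there is $n_0$ with the following property: no line in $\mathbb{R}^2$ intersects more than two of the squares $Q_n$, $n\ge n_0$, where $Q_n$ is the closed axis-parallel square with side length $\left\lfloor \frac{2^{n}}{cn^{1+\varepsilon}}\right\rfloor$ whose top left corner is $\left(2^{n},\left\lfloor \frac{2^{n}}{n^{\varepsilon}}\right\rfloor\right)$, i.e. $$Q_n=\left[2^n,\,2^n+\left\lfloor \tfrac{2^{n}}{cn^{1+\varepsilon}}\right\rfloor\right]\times\left[\left\lfloor \tfrac{2^{n}}{n^{\varepsilon}}\right\rfloor-\left\lfloor \tfrac{2^{n}}{cn^{1+\varepsilon}}\right\rfloor,\,\left\lfloor \tfrac{2^{n}}{n^{\varepsilon}}\right\rfloor\right].$$ *)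

theory Defs
  imports "HOL-Analysis.Analysis"
begin

definition side :: "real \<Rightarrow> real \<Rightarrow> nat \<Rightarrow> int" where
  "side \<epsilon> c n = \<lfloor>2 ^ n / (c * real n powr (1 + \<epsilon>))\<rfloor>"

definition top :: "real \<Rightarrow> nat \<Rightarrow> int" where
  "top \<epsilon> n = \<lfloor>2 ^ n / real n powr \<epsilon>\<rfloor>"

definition Qsq :: "real \<Rightarrow> real \<Rightarrow> nat \<Rightarrow> (real \<times> real) set" where
  "Qsq \<epsilon> c n = {2 ^ n .. 2 ^ n + real_of_int (side \<epsilon> c n)}
                  \<times> {real_of_int (top \<epsilon> n - side \<epsilon> c n) .. real_of_int (top \<epsilon> n)}"

definition is_line :: "(real \<times> real) set \<Rightarrow> bool" where
  "is_line L \<longleftrightarrow> (\<exists>a b d. (a, b) \<noteq> (0, 0) \<and> L = {(x, y). a * x + b * y = d})"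

end

theory Submission
  imports Defs
begin


lemma G_diff:
  fixes e x y :: real
  assumes "0 < e" "0 < x" "x < y"
  shows "e*(y-x)* y powr (-1-e) \<le> x powr (-e) - y powr (-e)"
    and "x powr (-e) - y powr (-e) \<le> e*(y-x)* x powr (-1-e)"
proof -
  have d: "\<And>t. x \<le> t \<Longrightarrow> t \<le> y \<Longrightarrow> ((\<lambda>t. t powr (-e)) has_real_derivative (-e) * t powr (-e - 1)) (at t)"
    using assms by (intro has_real_derivative_powr) auto
  from MVT2[OF \<open>x<y\<close> d] obtain z where z: "x<z" "z<y"
    "y powr (-e) - x powr (-e) = (y-x)*((-e)* z powr (-e-1))" by blast
  have ee: "-e-1 = -1-e" by simp
  have eq: "x powr (-e) - y powr (-e) = e*(y-x)* z powr (-1-e)" using z(3) unfolding ee by (simp add: algebra_simps)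
  have m1: "y powr (-1-e) \<le> z powr (-1-e)" using assms z by (intro powr_mono2') auto
  have m2: "z powr (-1-e) \<le> x powr (-1-e)" using assms z by (intro powr_mono2') auto
  have p: "0 \<le> e*(y-x)" using assms by auto
  show "e*(y-x)* y powr (-1-e) \<le> x powr (-e) - y powr (-e)"
    unfolding eq using mult_left_mono[OF m1 p] by simp
  show "x powr (-e) - y powr (-e) \<le> e*(y-x)* x powr(-1-e)"
    unfolding eq using mult_left_mono[OF m2 p] by simp
qed

lemma W_ratio:
  fixes e x y :: real
  assumes "0 < e" "e < 1" "1 \<le> x" "x \<le> y"
  shows "x powr (-1-e) \<le> (y/x)^2 * y powr (-1-e)"
proof -
  have "x powr (-1-e) = y powr (-1-e) * (y/x) powr (1+e)"
  proof -
    have ee: "-1-e = -(1+e)" by simp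
    have "y powr (-1-e) * (y/x) powr (1+e) = (1 / y powr (1+e)) * (y powr (1+e) / x powr (1+e))"
      using assms by (simp add: powr_divide powr_add[symmetric])
    also have "\<dots> = 1 / x powr (1+e)" using assms by simp
    also have "\<dots> = x powr (-1-e)" unfolding ee by (rule powr_minus_divide[symmetric])
    finally show ?thesis by simp
  qed
  also have "(y/x) powr (1+e) \<le> (y/x) powr 2" using assms by (intro powr_mono) auto
  hence "y powr (-1-e) * (y/x) powr (1+e) \<le> y powr (-1-e) * (y/x)^2"
    using assms by (intro mult_left_mono) auto
  finally show ?thesis by (simp add: mult.commute)
qed

lemma pow_ineq1: "(p::nat) \<ge> 1 \<Longrightarrow> p*(p+18)^2 + 384 \<le> 384*2^p"
proof (induction p rule: dec_induct)
  case base then show ?case by simp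
next
  case (step n)
  have "(Suc n)*(Suc n+18)^2 \<le> 2*n*(n+18)^2 + 384"
    using step(1) by (simp add: power2_eq_square algebra_simps)
  then show ?case using step by simp
qed

lemma pow_ineq2: "(p::nat) \<ge> 1 \<Longrightarrow> (p+18)^2 \<le> 256*2^p"
proof (induction p rule: dec_induct)
  case base then show ?case by simp
next
  case (step n)
  have "(Suc n+18)^2 \<le> 2*(n+18)^2"
    by (simp add: power2_eq_square algebra_simps)
  moreover have "2*(n+18)^2 \<le> 2*(256*2^n)" using step.IH by simp
  ultimately show ?case by simp
qed


lemma sq_point:
  fixes e C x y :: real and n :: nat
  assumes "0<e" "0<C" "n \<ge> 1" "(x,y) \<in> Qsq e C n"
  shows "2^n \<le> x" "x \<le> 2^n + 2^n * real n powr (-1-e) / C"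
    "2^n * real n powr (-e) - 1 - 2^n * real n powr (-1-e) / C \<le> y" "y \<le> 2^n * real n powr (-e)"
proof -
  have ee: "-1-e = -(1+e)" by simp
  have np: "real n > 0" using assms by simp
  have s1: "2 ^ n / (C * real n powr (1 + e)) = 2^n * real n powr (-1-e) / C"
    unfolding ee powr_minus_divide using assms np by (simp add: field_simps)
  have t1: "2 ^ n / real n powr e = 2^n * real n powr (-e)"
    unfolding powr_minus_divide using np by (simp add: field_simps)
  have sp: "0 \<le> 2 ^ n / (C * real n powr (1 + e))" using assms by simp
  have sd0: "0 \<le> real_of_int (side e C n)" unfolding side_def using sp by simp
  have sd1: "real_of_int (side e C n) \<le> 2^n * real n powr (-1-e) / C" unfolding side_def s1[symmetric]
    by simp
  have tp1: "real_of_int (top e n) \<le> 2^n * real n powr (-e)" unfolding top_def t1[symmetric] by simp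
  have tp2: "real_of_int (top e n) > 2^n * real n powr (-e) - 1" unfolding top_def t1[symmetric]
    by linarith
  from assms(4) have xy: "2^n \<le> x" "x \<le> 2^n + real_of_int (side e C n)"
    "real_of_int (top e n) - real_of_int (side e C n) \<le> y" "y \<le> real_of_int (top e n)"
    unfolding Qsq_def by auto
  show "2^n \<le> x" "x \<le> 2^n + 2^n * real n powr (-1-e) / C"
    "2^n * real n powr (-e) - 1 - 2^n * real n powr (-1-e) / C \<le> y" "y \<le> 2^n * real n powr (-e)"
    using xy sd0 sd1 tp1 tp2 by linarith+
qed

lemma sq_err:
  fixes e C x y A B d :: real and n :: nat
  assumes "0<e" "0<C" "n \<ge> 1" "(x,y) \<in> Qsq e C n" "A*x + B*y = d"
    and small: "1/2^n \<le> real n powr (-1-e) / C"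
  shows "\<bar>A + B * real n powr (-e) - d / 2^n\<bar> \<le> (\<bar>A\<bar>+\<bar>B\<bar>) * (2 * real n powr (-1-e) / C)"
proof -
  define W where "W = real n powr (-1-e) / C"
  define G where "G = real n powr (-e)"
  note pt = sq_point[OF assms(1-4)]
  have W0: "W \<ge> 0" unfolding W_def using assms by simp
  have h1: "\<bar>2^n - x\<bar> \<le> 2^n * W" using pt unfolding W_def by simp
  have h2: "\<bar>2^n * G - y\<bar> \<le> 1 + 2^n * W" using pt unfolding W_def G_def by simp
  have eq: "2^n * (A + B * G - d / 2^n) = A*(2^n - x) + B*(2^n*G - y)"
    using assms(5) by (simp add: algebra_simps)
  have "\<bar>A*(2^n - x) + B*(2^n*G - y)\<bar> \<le> \<bar>A\<bar> * (2^n * W) + \<bar>B\<bar> * (1 + 2^n * W)"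
  proof -
    have "\<bar>A*(2^n - x)\<bar> \<le> \<bar>A\<bar> * (2^n * W)" using h1 by (simp add: abs_mult mult_left_mono)
    moreover have "\<bar>B*(2^n*G - y)\<bar> \<le> \<bar>B\<bar> * (1 + 2^n * W)" using h2 by (simp add: abs_mult mult_left_mono)
    ultimately show ?thesis by (smt (verit) abs_triangle_ineq)
  qed
  also have "\<dots> \<le> 2^n * ((\<bar>A\<bar>+\<bar>B\<bar>) * (2 * W))"
  proof -
    have "1 \<le> 2^n * W" using small unfolding W_def by (simp add: field_simps)
    hence "\<bar>B\<bar> * 1 \<le> \<bar>B\<bar> * (2^n * W)" by (intro mult_left_mono) auto
    moreover have X: "0 \<le> W * (\<bar>A\<bar> * 2 ^ n)" using W0 by simp
    ultimately show ?thesis using W0 by (simp add: algebra_simps) (insert X, linarith)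
  qed
  finally have "\<bar>2^n * (A + B * G - d / 2^n)\<bar> \<le> 2^n * ((\<bar>A\<bar>+\<bar>B\<bar>) * (2 * W))"
    using eq by simp
  hence "2^n * \<bar>A + B * G - d / 2^n\<bar> \<le> 2^n * ((\<bar>A\<bar>+\<bar>B\<bar>) * (2 * W))"
    by (simp add: abs_mult)
  hence "\<bar>A + B * G - d / 2^n\<bar> \<le> (\<bar>A\<bar>+\<bar>B\<bar>) * (2 * W)"
    by (rule mult_left_le_imp_le) simp
  thus ?thesis unfolding W_def G_def by simp
qed


lemma no_three:
  fixes e C :: real and a b c :: nat and A B d xa ya xb yb xc yc :: real
  assumes e: "0<e" "e<1" and C: "C > 648/e" "C \<ge> 2"
    and ab: "16 \<le> a" "a < b" "b < c"
    and small: "\<forall>n\<ge>a. 1/2^n \<le> real n powr (-1-e)/C"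
    and AB: "(A,B) \<noteq> (0,0)"
    and pa: "(xa,ya) \<in> Qsq e C a" "A*xa + B*ya = d"
    and pb: "(xb,yb) \<in> Qsq e C b" "A*xb + B*yb = d"
    and pc: "(xc,yc) \<in> Qsq e C c" "A*xc + B*yc = d"
  shows False
proof -
  define W where "W n = real n powr (-1-e)" for n::nat
  define G where "G n = real n powr (-e)" for n::nat
  have C0: "C>0" using C by simp
  have Wle1: "W n \<le> 1" if "n \<ge> 1" for n
    using powr_mono2'[of "-1-e" 1 "real n"] that e unfolding W_def by simp
  have Gle1: "G n \<le> 1" if "n \<ge> 1" for n
    using powr_mono2'[of "-e" 1 "real n"] that e unfolding G_def by simp
  have G0: "0 \<le> G n" for n unfolding G_def by simp
  have W0: "0 < W n" if "n \<ge> 1" for n using that unfolding W_def by simp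
  have a1: "a \<ge> 1" "b \<ge> 1" "c \<ge> 1" using ab by auto
  note qa = sq_point[OF e(1) C0 a1(1) pa(1), folded W_def G_def]
  note qb = sq_point[OF e(1) C0 a1(2) pb(1), folded W_def G_def]
  have ra: "\<bar>A + B * G a - d * (1/2^a)\<bar> \<le> (\<bar>A\<bar>+\<bar>B\<bar>) * (2 * W a / C)"
    using sq_err[OF e(1) C0 a1(1) pa] small ab unfolding W_def G_def by simp
  have rb: "\<bar>A + B * G b - d * (1/2^b)\<bar> \<le> (\<bar>A\<bar>+\<bar>B\<bar>) * (2 * W b / C)"
    using sq_err[OF e(1) C0 a1(2) pb] small ab unfolding W_def G_def by simp
  have rc: "\<bar>A + B * G c - d * (1/2^c)\<bar> \<le> (\<bar>A\<bar>+\<bar>B\<bar>) * (2 * W c / C)"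
    using sq_err[OF e(1) C0 a1(3) pc] small ab unfolding W_def G_def by simp
  have p2: "2^a * 2 \<le> (2::real)^b"
  proof -
    have "(2::real)^(a+1) \<le> 2^b" using ab by (intro power_increasing) auto
    thus ?thesis by simp
  qed
  have p4: "(4::real) \<le> 2^b"
  proof -
    have "(2::real)^2 \<le> 2^b" using ab by (intro power_increasing) auto
    thus ?thesis by simp
  qed
  have hWa: "2^a * W a / C \<le> 2^a / 2"
  proof -
    have "W a / C \<le> 1/2" using Wle1[OF a1(1)] C W0[OF a1(1)] by (simp add: field_simps)
    hence "2^a * (W a / C) \<le> 2^a * (1/2)" by (intro mult_left_mono) auto
    thus ?thesis by simp
  qed
  have hWb: "2^b * W b / C \<le> 2^b / 2"
  proof -
    have "W b / C \<le> 1/2" using Wle1[OF a1(2)] C W0[OF a1(2)] by (simp add: field_simps)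
    hence "2^b * (W b / C) \<le> 2^b * (1/2)" by (intro mult_left_mono) auto
    thus ?thesis by simp
  qed
  have Ga1: "2^a * G a \<le> 2^a" using Gle1[OF a1(1)] by simp
  have Gb1: "2^b * G b \<le> 2^b" using Gle1[OF a1(2)] by simp
  have Ga0: "0 \<le> 2^a * G a" using G0 by simp
  have Gb0: "0 \<le> 2^b * G b" using G0 by simp
  have hx: "xb - xa \<ge> 2^b/4" using qa qb hWa p2 by linarith
  have hy: "\<bar>yb - ya\<bar> \<le> 2 * 2^b" using qa qb hWa hWb p2 p4 Ga1 Gb1 Ga0 Gb0 by linarith
  have eqAB: "A*(xb - xa) = - B*(yb - ya)" using pa(2) pb(2) by (simp add: algebra_simps)
  have "\<bar>A\<bar> * (2^b/4) \<le> \<bar>A\<bar> * \<bar>xb - xa\<bar>"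
  proof -
    have "\<bar>xb - xa\<bar> = xb - xa" using hx p4 by (intro abs_of_nonneg) linarith
    hence "2^b/4 \<le> \<bar>xb - xa\<bar>" using hx by simp
    thus ?thesis by (intro mult_left_mono) auto
  qed
  also have "\<dots> = \<bar>B\<bar> * \<bar>yb - ya\<bar>" using eqAB by (metis abs_minus_cancel abs_mult)
  also have "\<dots> \<le> \<bar>B\<bar> * (2 * 2^b)" using hy by (intro mult_left_mono) auto
  finally have "\<bar>A\<bar> * (2^b/4) \<le> \<bar>B\<bar> * (2 * 2^b)" .
  hence A8: "\<bar>A\<bar> \<le> 8 * \<bar>B\<bar>" by (simp add: field_simps)
  have B0: "B \<noteq> 0" using A8 AB by auto
  have hAB: "\<bar>A\<bar>+\<bar>B\<bar> \<le> 9 * \<bar>B\<bar>" using A8 by simp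
  have err: "\<bar>A + B * G n - d * (1/2^n)\<bar> \<le> \<bar>B\<bar> * (18 * W n / C)"
    if "\<bar>A + B * G n - d * (1/2^n)\<bar> \<le> (\<bar>A\<bar>+\<bar>B\<bar>) * (2 * W n / C)" "n \<ge> 1" for n
  proof -
    have "(\<bar>A\<bar>+\<bar>B\<bar>) * (2 * W n / C) \<le> (9 * \<bar>B\<bar>) * (2 * W n / C)"
      using hAB W0[OF that(2)] C0 by (intro mult_right_mono) auto
    thus ?thesis using that by simp
  qed
  note ea = err[OF ra a1(1)] and eb = err[OF rb a1(2)] and ec = err[OF rc a1(3)]
  define p where "p = b - a"
  define q where "q = c - b"
  have bp: "b = a + p" and cq: "c = b + q" and p1: "p \<ge> 1" and q1: "q \<ge> 1"
    using ab unfolding p_def q_def by auto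
  define P :: real where "P = 2^p"
  define k :: real where "k = 1 - 1/2^q"
  define u :: real where "u = 1/2^b"
  have P2: "P \<ge> 2" unfolding P_def using p1
    by (metis power_increasing power_one_right numeral_le_iff one_le_numeral semiring_norm(69))
  have k12: "k \<ge> 1/2" "k \<le> 1"
  proof -
    have "(2::real)^1 \<le> 2^q" using q1 by (intro power_increasing) auto
    thus "k \<ge> 1/2" "k \<le> 1" unfolding k_def by (auto simp: field_simps)
  qed
  have u0: "u > 0" unfolding u_def by simp
  have za: "1/2^a = P*u" unfolding P_def u_def bp by (simp add: power_add)
  have zc: "1/2^c = u*(1-k)" unfolding k_def u_def cq by (simp add: power_add)
  define Wb2 where "Wb2 = W (b+2)"
  have Wb20: "Wb2 > 0" unfolding Wb2_def using W0 by simp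
  have F1: "G a - G b \<le> e * real p * W a"
    using G_diff(2)[OF e(1), of "real a" "real b"] ab unfolding G_def W_def bp by simp
  have rat: "(real b + 2) / real a \<le> (real p + 18) / 16"
  proof -
    have h: "16 * real p \<le> real a * real p" using ab by (intro mult_right_mono) auto
    have h2: "real a * (real p + 18) = real a * real p + 18 * real a" by (simp add: algebra_simps)
    have "16 * (real a + real p + 2) \<le> real a * (real p + 18)" unfolding h2 using h ab by simp
    thus ?thesis using ab unfolding bp by (simp add: field_simps)
  qed
  have rat2: "((real b + 2) / real a)^2 \<le> ((real p + 18) / 16)^2"
    using rat ab by (intro power_mono) auto
  have WaR: "W a \<le> ((real p + 18) / 16)^2 * Wb2"
  proof -
    have "W a \<le> ((real b + 2) / real a)^2 * Wb2"
      using W_ratio[OF e, of "real a" "real b + 2"] ab unfolding W_def Wb2_def by (simp add: add.commute)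
    also have "\<dots> \<le> ((real p + 18) / 16)^2 * Wb2" using rat2 Wb20 by (intro mult_right_mono) auto
    finally show ?thesis .
  qed
  have I1: "real p * ((real p + 18) / 16)^2 \<le> 3/2 * (P - 1)"
  proof -
    have "real (p*(p+18)^2 + 384) \<le> real (384*2^p)" using pow_ineq1[OF p1] by linarith
    hence "real p * (real p + 18)^2 + 384 \<le> 384 * P" unfolding P_def by simp
    thus ?thesis by (simp add: field_simps power2_eq_square)
  qed
  have I2: "((real p + 18) / 16)^2 \<le> P"
  proof -
    have "real ((p+18)^2) \<le> real (256*2^p)" using pow_ineq2[OF p1] by linarith
    hence "(real p + 18)^2 \<le> 256 * P" unfolding P_def by simp
    thus ?thesis by (simp add: field_simps power2_eq_square)
  qed
  have F3: "real p * W a \<le> 3/2 * (P - 1) * Wb2"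
  proof -
    have "real p * W a \<le> real p * (((real p + 18) / 16)^2 * Wb2)" using WaR by (intro mult_left_mono) auto
    also have "\<dots> = (real p * ((real p + 18) / 16)^2) * Wb2" by simp
    also have "\<dots> \<le> 3/2 * (P - 1) * Wb2" using I1 Wb20 by (intro mult_right_mono) auto
    finally show ?thesis .
  qed
  have F4: "W a \<le> P * Wb2"
    using WaR I2 Wb20 by (meson mult_right_mono less_imp_le order_trans)
  have F5: "W b \<le> 2 * Wb2"
  proof -
    have "W b \<le> ((real b + 2) / real b)^2 * Wb2"
      using W_ratio[OF e, of "real b" "real b + 2"] ab unfolding W_def Wb2_def by (simp add: add.commute)
    also have "((real b + 2) / real b)^2 \<le> 2"
    proof -
      have h: "17 * real b \<le> real b * real b" using ab by (intro mult_right_mono) auto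
      have h2: "(real b + 2)^2 = real b * real b + 4 * real b + 4" "2 * (real b)^2 = 2 * (real b * real b)"
        by (simp_all add: power2_eq_square algebra_simps)
      have "(17::real) \<le> real b" using ab by simp
      then have "(real b + 2)^2 \<le> 2 * (real b)^2" unfolding h2 using h by linarith
      thus ?thesis using ab by (simp add: field_simps)
    qed
    hence "((real b + 2) / real b)^2 * Wb2 \<le> 2 * Wb2" using Wb20 by (intro mult_right_mono) auto
    finally show ?thesis .
  qed
  have F6: "W c \<le> W b" unfolding W_def using ab e by (intro powr_mono2') auto
  have F2: "G b - G c \<ge> 2 * k * e * Wb2"
  proof (cases "q = 1")
    case True
    hence k2: "k = 1/2" unfolding k_def by simp
    have "e * W (b+1) \<le> G b - G c"
      using G_diff(1)[OF e(1), of "real b" "real b + 1"] ab True unfolding G_def W_def cq by (simp add: add.commute)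
    moreover have "W (b+2) \<le> W (b+1)" unfolding W_def using e by (intro powr_mono2') auto
    ultimately have "e * W (b+2) \<le> G b - G c" using e by (meson mult_left_mono less_imp_le order_trans)
    thus ?thesis unfolding k2 Wb2_def by simp
  next
    case False
    hence "c \<ge> b+2" using q1 cq by auto
    have "e * 2 * W (b+2) \<le> G b - G (b+2)"
      using G_diff(1)[OF e(1), of "real b" "real b + 2"] ab unfolding G_def W_def by (simp add: add.commute)
    moreover have "G c \<le> G (b+2)" unfolding G_def using e \<open>c \<ge> b+2\<close> by (intro powr_mono2') auto
    moreover have "2 * k * e * Wb2 \<le> e * 2 * Wb2"
    proof -
      have "k * (2*e*Wb2) \<le> 1 * (2*e*Wb2)" using k12 e Wb20 by (intro mult_right_mono) auto
      thus ?thesis by (simp add: algebra_simps)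
    qed
    ultimately show ?thesis unfolding Wb2_def by linarith
  qed
  define E where "E = (P*u - u)*(G b - G c) - (u - u*(1-k))*(G a - G b)"
  define ra' where "ra' = A + B * G a - d * (1/2^a)"
  define rb' where "rb' = A + B * G b - d * (1/2^b)"
  define rc' where "rc' = A + B * G c - d * (1/2^c)"
  have ident: "(P*u - u*(1-k)) * rb' - (u - u*(1-k)) * ra' - (P*u - u) * rc' = B * E"
    unfolding ra'_def rb'_def rc'_def E_def za zc u_def[symmetric] by (simp add: algebra_simps)
  have c1: "P*u - u*(1-k) \<ge> 0" "u - u*(1-k) \<ge> 0" "P*u - u \<ge> 0"
  proof -
    have h1: "1*u \<le> P*u" using u0 P2 by (intro mult_right_mono) auto
    have h2: "0 \<le> k*u" using k12 u0 by simp
    have h3: "u*(1-k) = u - k*u" by (simp add: algebra_simps)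
    show "P*u - u*(1-k) \<ge> 0" "u - u*(1-k) \<ge> 0" "P*u - u \<ge> 0" unfolding h3 using h1 h2 by linarith+
  qed
  have BE: "\<bar>B\<bar> * \<bar>E\<bar> \<le> \<bar>B\<bar> * (18/C) * ((P*u - u*(1-k)) * W b + (u - u*(1-k)) * W a + (P*u - u) * W c)"
  proof -
    have "\<bar>B\<bar> * \<bar>E\<bar> = \<bar>(P*u - u*(1-k)) * rb' - (u - u*(1-k)) * ra' - (P*u - u) * rc'\<bar>"
      unfolding ident by (simp add: abs_mult)
    also have "\<dots> \<le> (P*u - u*(1-k)) * \<bar>rb'\<bar> + (u - u*(1-k)) * \<bar>ra'\<bar> + (P*u - u) * \<bar>rc'\<bar>"
    proof -
      have t: "\<bar>x1 - x2 - x3\<bar> \<le> \<bar>x1\<bar> + \<bar>x2\<bar> + \<bar>x3\<bar>" for x1 x2 x3 :: real by linarith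
      show ?thesis using t[of "(P*u - u*(1-k)) * rb'" "(u - u*(1-k)) * ra'" "(P*u - u) * rc'"] c1
        by (simp add: abs_mult)
    qed
    also have "\<dots> \<le> (P*u - u*(1-k)) * (\<bar>B\<bar> * (18 * W b / C)) + (u - u*(1-k)) * (\<bar>B\<bar> * (18 * W a / C))
        + (P*u - u) * (\<bar>B\<bar> * (18 * W c / C))"
      using ea eb ec c1 unfolding ra'_def rb'_def rc'_def
      by (intro add_mono mult_left_mono) auto
    also have "\<dots> = \<bar>B\<bar> * (18/C) * ((P*u - u*(1-k)) * W b + (u - u*(1-k)) * W a + (P*u - u) * W c)"
      using C0 by (simp add: field_simps)
    finally show ?thesis .
  qed
  have br: "(P*u - u*(1-k)) * W b + (u - u*(1-k)) * W a + (P*u - u) * W c \<le> 9 * (u * k * P * Wb2)"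
  proof -
    have "(P*u - u*(1-k)) * W b \<le> (P*u - u*(1-k)) * (2*Wb2)" using F5 c1 by (intro mult_left_mono) auto
    moreover have "(u - u*(1-k)) * W a \<le> (u - u*(1-k)) * (P*Wb2)" using F4 c1 by (intro mult_left_mono) auto
    moreover have "(P*u - u) * W c \<le> (P*u - u) * (2*Wb2)" using F5 F6 c1 by (intro mult_left_mono) auto
    moreover have "(P*u - u*(1-k)) * (2*Wb2) + (u - u*(1-k)) * (P*Wb2) + (P*u - u) * (2*Wb2)
        = u * Wb2 * (4*P - 4 + 2*k + k*P)" by (simp add: algebra_simps)
    moreover have "u * Wb2 * (4*P - 4 + 2*k + k*P) \<le> u * Wb2 * (9*k*P)"
    proof -
      have "4*P - 4 + 2*k \<le> 8*k*P"
      proof -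
        have "(1/2)*(8*P) \<le> k*(8*P)" using k12 P2 by (intro mult_right_mono) auto
        hence "4*P \<le> 8*k*P" by (simp add: algebra_simps)
        thus ?thesis using k12 by linarith
      qed
      hence "4*P - 4 + 2*k + k*P \<le> 9*k*P" by linarith
      thus ?thesis using u0 Wb20 by (intro mult_left_mono) auto
    qed
    moreover have "u * Wb2 * (9*k*P) = 9 * (u * k * P * Wb2)" by (simp add: algebra_simps)
    ultimately show ?thesis by linarith
  qed
  have Elow: "E \<ge> 1/2 * (u * k * e * Wb2 * (P - 1))"
  proof -
    have "(P*u - u)*(G b - G c) \<ge> (P*u - u) * (2 * k * e * Wb2)" using F2 c1 by (intro mult_left_mono) auto
    moreover have "(u - u*(1-k))*(G a - G b) \<le> (u - u*(1-k)) * (3/2 * (P - 1) * Wb2 * e)"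
    proof -
      have "G a - G b \<le> 3/2 * (P - 1) * Wb2 * e"
      proof -
        have "e * (real p * W a) \<le> e * (3/2 * (P - 1) * Wb2)" using F3 e by (intro mult_left_mono) auto
        thus ?thesis using F1 by (simp add: algebra_simps)
      qed
      thus ?thesis using c1 by (intro mult_left_mono) auto
    qed
    moreover have "(P*u - u) * (2 * k * e * Wb2) = 2 * (u * k * e * Wb2 * (P - 1))" by (simp add: algebra_simps)
    moreover have "(u - u*(1-k)) * (3/2 * (P - 1) * Wb2 * e) = 3/2 * (u * k * e * Wb2 * (P - 1))" by (simp add: field_simps)
    ultimately show ?thesis unfolding E_def by linarith
  qed
  define X where "X = u * k * Wb2"
  have X0: "X > 0" unfolding X_def using u0 k12 Wb20 by simp
  have "\<bar>B\<bar> * (1/2 * (e * (P - 1)) * X) \<le> \<bar>B\<bar> * \<bar>E\<bar>"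
  proof -
    have "1/2 * (e * (P - 1)) * X \<le> \<bar>E\<bar>" using Elow unfolding X_def by (simp add: algebra_simps)
    thus ?thesis by (intro mult_left_mono) auto
  qed
  also have "\<dots> \<le> \<bar>B\<bar> * (18/C) * (9 * (P * X))"
  proof -
    have "\<bar>B\<bar> * (18/C) * ((P*u - u*(1-k)) * W b + (u - u*(1-k)) * W a + (P*u - u) * W c)
       \<le> \<bar>B\<bar> * (18/C) * (9 * (u * k * P * Wb2))" using br C0 by (intro mult_left_mono) auto
    thus ?thesis using BE unfolding X_def by (simp add: algebra_simps)
  qed
  finally have "\<bar>B\<bar> * X * (1/2 * (e * (P - 1))) \<le> \<bar>B\<bar> * X * (162 * P / C)"
    by (simp add: algebra_simps)
  moreover have BX: "\<bar>B\<bar> * X > 0" using B0 X0 by simp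
  ultimately have h: "1/2 * (e * (P - 1)) \<le> 162 * P / C" by (rule mult_left_le_imp_le)
  have pe: "2 * e \<le> P * e" using P2 e by (intro mult_right_mono) auto
  have eq1: "1/2 * (e * (P - 1)) = P*e/2 - e/2" "e * P / 4 = P * e / 4" by (simp_all add: field_simps)
  have "e * P / 4 \<le> 1/2 * (e * (P - 1))" unfolding eq1 using pe by linarith
  with h have "e * P / 4 \<le> 162 * P / C" by linarith
  hence "e * C \<le> 648" using C0 P2 by (simp add: field_simps)
  moreover have "648 < e * C" using C e by (simp add: field_simps)
  ultimately show False by linarith
qed



lemma cube_le: "(n::nat) \<ge> 10 \<Longrightarrow> n^3 \<le> 2^n"
proof (induction n rule: dec_induct)
  case base then show ?case by simp
next
  case (step n)
  have a: "3*n*n + 3*n + 1 \<le> n*n*n"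
  proof -
    have "4*n*n \<le> n*n*n" using step(1) by simp
    moreover have "3*n + 1 \<le> n*n"
    proof -
      have "10 * n \<le> n * n" using step(1) by (intro mult_le_mono1)
      thus ?thesis using step(1) by linarith
    qed
    ultimately show ?thesis by linarith
  qed
  have "(Suc n)^3 = n*n*n + (3*n*n + 3*n + 1)" by (simp add: power3_eq_cube algebra_simps)
  also have "\<dots> \<le> 2 * (n*n*n)" using a by linarith
  also have "\<dots> \<le> 2 * 2^n" using step.IH by (simp add: power3_eq_cube)
  finally show ?case by simp
qed

lemma eventually_small:
  fixes e C :: real
  assumes "0 < e" "e < 1" "C > 0"
  shows "\<exists>n0::nat. n0 \<ge> 16 \<and> (\<forall>n\<ge>n0. 1/2^n \<le> real n powr (-1-e)/C)"
proof (intro exI conjI allI impI)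
  define n0 where "n0 = max 16 (nat \<lceil>C\<rceil>)"
  show "n0 \<ge> 16" unfolding n0_def by simp
  fix n assume n: "n0 \<le> n"
  have n16: "n \<ge> 16" and nC: "C \<le> real n" using n unfolding n0_def by (auto simp: nat_le_iff ceiling_le_iff)
  have np: "real n > 0" using n16 by simp
  have "real n powr (1+e) \<le> real n powr 2" using n16 assms by (intro powr_mono) auto
  also have "\<dots> = real n ^ 2" using np by (simp add: powr_numeral)
  finally have h1: "C * real n powr (1+e) \<le> C * real n ^ 2" using assms by simp
  also have "\<dots> \<le> real n * real n ^ 2" using nC by (intro mult_right_mono) auto
  also have "\<dots> = real (n^3)" by (simp add: power3_eq_cube power2_eq_square)
  also have "\<dots> \<le> real (2^n)" using cube_le[of n] n16 by linarith
  finally have h: "C * real n powr (1+e) \<le> 2^n" by simp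
  have ee: "-1-e = -(1+e)" by simp
  have pp: "real n powr (1+e) > 0" using np by simp
  show "1/2^n \<le> real n powr (-1-e)/C" unfolding ee powr_minus_divide
    using h pp assms by (simp add: field_simps)
qed

lemma three_card:
  fixes S :: "nat set"
  assumes H: "\<And>a b c. a \<in> S \<Longrightarrow> b \<in> S \<Longrightarrow> c \<in> S \<Longrightarrow> a < b \<Longrightarrow> b < c \<Longrightarrow> False"
  shows "finite S \<and> card S \<le> 2"
proof (rule ccontr)
  assume "\<not> (finite S \<and> card S \<le> 2)"
  then obtain T where T: "T \<subseteq> S" "card T = 3"
  proof (cases "finite S")
    case True
    with \<open>\<not> (finite S \<and> card S \<le> 2)\<close> have "3 \<le> card S" by simp
    then show ?thesis using obtain_subset_with_card_n that by metis
  next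
    case False
    then show ?thesis using infinite_arbitrarily_large that by metis
  qed
  then obtain x y z where xyz: "T = {x,y,z}" "x \<noteq> y" "y \<noteq> z" "x \<noteq> z" by (auto simp: card_3_iff)
  with T have "x \<in> S" "y \<in> S" "z \<in> S" by auto
  with xyz H show False by (metis linorder_neqE_nat)
qed

theorem lemma3p2:
  fixes \<epsilon> :: real
  assumes "0 < \<epsilon>" and "\<epsilon> < 1"
  shows "\<exists>c0::real. \<forall>c\<ge>c0. \<exists>n0::nat. \<forall>L. is_line L \<longrightarrow>
           finite {n. n \<ge> n0 \<and> L \<inter> Qsq \<epsilon> c n \<noteq> {}} \<and>
           card {n. n \<ge> n0 \<and> L \<inter> Qsq \<epsilon> c n \<noteq> {}} \<le> 2"
proof (rule exI[of _ "648/\<epsilon> + 2"], intro allI impI)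
  fix c :: real assume c: "c \<ge> 648/\<epsilon> + 2"
  have pos: "648/\<epsilon> > 0" using assms by simp
  have c0: "c > 0" "c \<ge> 2" "c > 648/\<epsilon>" using c pos by linarith+
  obtain n0 :: nat where n0: "n0 \<ge> 16" "\<forall>n\<ge>n0. 1/2^n \<le> real n powr (-1-\<epsilon>)/c"
    using eventually_small[OF assms c0(1)] by blast
  show "\<exists>n0::nat. \<forall>L. is_line L \<longrightarrow>
           finite {n. n \<ge> n0 \<and> L \<inter> Qsq \<epsilon> c n \<noteq> {}} \<and>
           card {n. n \<ge> n0 \<and> L \<inter> Qsq \<epsilon> c n \<noteq> {}} \<le> 2"
  proof (intro exI allI impI)
    fix L assume "is_line L"
    then obtain A B d where AB: "(A, B) \<noteq> (0, 0)" and L: "L = {(x, y). A * x + B * y = d}"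
      unfolding is_line_def by blast
    show "finite {n. n \<ge> n0 \<and> L \<inter> Qsq \<epsilon> c n \<noteq> {}} \<and>
           card {n. n \<ge> n0 \<and> L \<inter> Qsq \<epsilon> c n \<noteq> {}} \<le> 2"
    proof (rule three_card)
      fix a b cc assume "a \<in> {n. n \<ge> n0 \<and> L \<inter> Qsq \<epsilon> c n \<noteq> {}}" "b \<in> {n. n \<ge> n0 \<and> L \<inter> Qsq \<epsilon> c n \<noteq> {}}"
        "cc \<in> {n. n \<ge> n0 \<and> L \<inter> Qsq \<epsilon> c n \<noteq> {}}" and abc: "a < b" "b < cc"
      then have ha: "a \<ge> n0" and i1: "L \<inter> Qsq \<epsilon> c a \<noteq> {}" and i2: "L \<inter> Qsq \<epsilon> c b \<noteq> {}"
        and i3: "L \<inter> Qsq \<epsilon> c cc \<noteq> {}"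
        by auto
      from i1 obtain xa ya where pa: "(xa,ya) \<in> Qsq \<epsilon> c a" "A*xa + B*ya = d" unfolding L by auto
      from i2 obtain xb yb where pb: "(xb,yb) \<in> Qsq \<epsilon> c b" "A*xb + B*yb = d" unfolding L by auto
      from i3 obtain xc yc where pc: "(xc,yc) \<in> Qsq \<epsilon> c cc" "A*xc + B*yc = d" unfolding L by auto
      have small: "\<forall>n\<ge>a. 1/2^n \<le> real n powr (-1-\<epsilon>)/c" using n0 ha by auto
      have a16: "16 \<le> a" using n0 ha by linarith
      show False by (rule no_three[OF assms c0(3) c0(2) a16 abc small AB pa pb pc])
    qed
  qed
qed

end
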